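(* On the vector space $\mathbb{R}^{(\mathbb{N})}$, let $\boldsymbol{\mu}$ be the finest vector topology and $\boldsymbol{\nu}$ the finest locally convex vector topology in which $e_n\to\mathbf{0}$. Then: (1) the family $\mathcal{N}_{\mathbf{s}}$ of all sets $U(\mathrm{S})=\bigcup_{k\in\omega}\big(S(\mathbf{a}_0)+\cdots+S(\mathbf{a}_k)\big)$, where $\mathrm{S}=\{S(\mathbf{a}_k)\}_{k\in\omega}$ ranges over all sequences with $\mathbf{a}_k\in\mathcal{A}$, is a base at $\mathbf{0}$ for $\boldsymbol{\mu}$; (2) the family $\{\mathrm{conv}(V): V\in\mathcal{N}_{\mathbf{s}}\}$ is a base at $\mathbf{0}$ for $\boldsymbol{\nu}$; (3) for every $\boldsymbol{\nu}$-neighborhood $U$ of $\mathbf{0}$, every $t\in\mathbb{N}$ and every $a>0$ there is $q\in\mathbb{N}$ such that every vector $v=\lambda_1 a e_{m_1}+\cdots+\lambda_t a e_{m_t}$ with $q<m_1<\cdots<m_t$ and $\lambda_1,\dots,\lambda_t\in[-1,1]$ belongs to $U$.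
   Context: $\mathbb{N}=\{1,2,\dots\}$, $\omega=\{0\}\cup\mathbb{N}$. $\mathbb{R}^{(\mathbb{N})}$ is the space of finitely supported real sequences, $\mathbf{0}$ its zero vector, and $e_n$ the sequence with $1$ in position $n$ and $0$ elsewhere. (With $\mathbf{s}=\{1/n\}_{n\in\mathbb{N}}\cup\{0\}$ and base point $0$, $(\mathbb{R}^{(\mathbb{N})},\boldsymbol{\nu})$ is the Graev free locally convex space $L_G(\mathbf{s})$, the point $1/n$ corresponding to $e_n$.) $\mathcal{A}$ is the family of all sequences $\mathbf{a}=(a_n)_{n\in\mathbb{N}}$ of positive reals with $\lim_n a_n=\infty$. For $\mathbf{a}\in\mathcal{A}$, $S(\mathbf{a})=\bigcup_{n\in\mathbb{N}}\{t e_n : |t|<a_n\}$. $\mathrm{conv}(A)$ denotes the convex hull of $A$. *)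

theory Defs
  imports "HOL-Analysis.Analysis" "HOL-Library.Function_Algebras"
begin

instantiation "fun" :: (type, real_vector) real_vector
begin
definition scaleR_fun :: "real \<Rightarrow> ('a \<Rightarrow> 'b) \<Rightarrow> 'a \<Rightarrow> 'b"
  where "scaleR_fun c f = (\<lambda>x. c *\<^sub>R f x)"
instance by standard (auto simp: scaleR_fun_def fun_eq_iff scaleR_add_right scaleR_add_left)
end

text \<open>The space R^(N) of finitely supported real sequences indexed by N = {1,2,...}:
  sequences x :: nat \<Rightarrow> real with x 0 = 0 (position 0 is unused) and finite support.\<close>

definition Rfin :: "(nat \<Rightarrow> real) set" where
  "Rfin = {x. x 0 = 0 \<and> finite {n. x n \<noteq> 0}}"

text \<open>Unit vector e_n (meaningful for n \<ge> 1).\<close>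
definition e :: "nat \<Rightarrow> nat \<Rightarrow> real" where
  "e n = (\<lambda>k. if k = n then 1 else 0)"

definition vector_topology :: "(nat \<Rightarrow> real) topology \<Rightarrow> bool" where
  "vector_topology T \<longleftrightarrow>
     topspace T = Rfin \<and>
     continuous_map (prod_topology T T) T (\<lambda>(x, y). x + y) \<and>
     continuous_map (prod_topology euclideanreal T) T (\<lambda>(c, x). c *\<^sub>R x)"

definition locally_convex_vector_topology :: "(nat \<Rightarrow> real) topology \<Rightarrow> bool" where
  "locally_convex_vector_topology T \<longleftrightarrow>
     vector_topology T \<and>
     (\<forall>U. openin T U \<and> 0 \<in> U \<longrightarrow> (\<exists>V. openin T V \<and> convex V \<and> 0 \<in> V \<and> V \<subseteq> U))"

definition e_null :: "(nat \<Rightarrow> real) topology \<Rightarrow> bool" where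
  "e_null T \<longleftrightarrow> limitin T e 0 sequentially"

definition finest :: "((nat \<Rightarrow> real) topology \<Rightarrow> bool) \<Rightarrow> (nat \<Rightarrow> real) topology \<Rightarrow> bool" where
  "finest P T \<longleftrightarrow> P T \<and> (\<forall>T'. P T' \<longrightarrow> (\<forall>U. openin T' U \<longrightarrow> openin T U))"

definition nbhd :: "'a topology \<Rightarrow> 'a \<Rightarrow> 'a set \<Rightarrow> bool" where
  "nbhd T x U \<longleftrightarrow> (\<exists>W. openin T W \<and> x \<in> W \<and> W \<subseteq> U)"

definition nbhd_base :: "'a topology \<Rightarrow> 'a \<Rightarrow> 'a set set \<Rightarrow> bool" where
  "nbhd_base T x B \<longleftrightarrow>
     (\<forall>V\<in>B. nbhd T x V) \<and> (\<forall>U. nbhd T x U \<longrightarrow> (\<exists>V\<in>B. V \<subseteq> U))"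

text \<open>The family \<A> of sequences of positive reals tending to infinity (indexed by N = {1,2,...};
  the value at 0 is irrelevant).\<close>
definition seqA :: "(nat \<Rightarrow> real) set" where
  "seqA = {a. (\<forall>n\<ge>1. 0 < a n) \<and> filterlim a at_top sequentially}"

definition S :: "(nat \<Rightarrow> real) \<Rightarrow> (nat \<Rightarrow> real) set" where
  "S a = {t *\<^sub>R e n | t n. n \<ge> 1 \<and> \<bar>t\<bar> < a n}"

definition Useq :: "(nat \<Rightarrow> nat \<Rightarrow> real) \<Rightarrow> (nat \<Rightarrow> real) set" where
  "Useq as = (\<Union>k. {(\<Sum>i\<le>k. x i) | x. \<forall>i\<le>k. x i \<in> S (as i)})"

definition N_s :: "(nat \<Rightarrow> real) set set" where
  "N_s = {Useq as | as. \<forall>k. as k \<in> seqA}"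

end

theory Submission
  imports Defs
begin


lemma sum_apply_fun: "(\<Sum>i\<in>A. f i) (x::'a) = (\<Sum>i\<in>A. (f i x :: real))"
  by (induction A rule: infinite_finite_induct) auto

lemma scaleR_apply_fun: "(c *\<^sub>R f) x = c * (f x :: real)"
  by (simp add: scaleR_fun_def)

lemma plus_apply_fun: "(f + g) x = f x + (g x :: real)" by simp
lemma zero_apply_fun: "(0::'a\<Rightarrow>real) x = 0" by simp

lemma Rfin_add: "x \<in> Rfin \<Longrightarrow> y \<in> Rfin \<Longrightarrow> x + y \<in> Rfin"
proof -
  assume a: "x \<in> Rfin" "y \<in> Rfin"
  have "{n. (x+y) n \<noteq> 0} \<subseteq> {n. x n \<noteq> 0} \<union> {n. y n \<noteq> 0}" by auto
  with a show ?thesis unfolding Rfin_def by (auto intro: finite_subset)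
qed

lemma Rfin_scale: "x \<in> Rfin \<Longrightarrow> c *\<^sub>R x \<in> Rfin"
proof -
  assume a: "x \<in> Rfin"
  have "{n. (c *\<^sub>R x) n \<noteq> 0} \<subseteq> {n. x n \<noteq> 0}" by (auto simp: scaleR_apply_fun)
  with a show ?thesis unfolding Rfin_def by (auto intro: finite_subset simp: scaleR_apply_fun)
qed

lemma Rfin_0: "0 \<in> Rfin" by (simp add: Rfin_def)

lemma Rfin_e: "n \<ge> 1 \<Longrightarrow> e n \<in> Rfin"
  unfolding Rfin_def e_def by auto

lemma convex_Rfin: "convex Rfin"
  unfolding convex_def using Rfin_add Rfin_scale by blast

lemma Rfin_sum: "(\<And>i. i \<in> A \<Longrightarrow> f i \<in> Rfin) \<Longrightarrow> (\<Sum>i\<in>A. f i) \<in> Rfin"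
  by (induction A rule: infinite_finite_induct) (auto simp: Rfin_0 Rfin_add)

lemma Rfin_repr: assumes "x \<in> Rfin" shows "x = (\<Sum>n\<in>{n. x n \<noteq> 0}. x n *\<^sub>R e n)"
proof
  fix k
  have fin: "finite {n. x n \<noteq> 0}" using assms by (simp add: Rfin_def)
  show "x k = (\<Sum>n\<in>{n. x n \<noteq> 0}. x n *\<^sub>R e n) k"
  proof (cases "x k = 0")
    case True
    then show ?thesis by (auto simp: sum_apply_fun scaleR_apply_fun e_def intro!: sum.neutral)
  next
    case False
    have "(\<Sum>n\<in>{n. x n \<noteq> 0}. (x n *\<^sub>R e n) k) = (\<Sum>n\<in>{k}. (x n *\<^sub>R e n) k)"
      by (rule sum.mono_neutral_right) (use fin False in \<open>auto simp: scaleR_apply_fun e_def\<close>)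
    then show ?thesis by (simp add: sum_apply_fun scaleR_apply_fun e_def)
  qed
qed

lemma S_mono: assumes "\<And>n. n \<ge> 1 \<Longrightarrow> a n \<le> b n" shows "S a \<subseteq> S b"
proof
  fix v assume "v \<in> S a"
  then obtain t n where "v = t *\<^sub>R e n" "n \<ge> 1" "\<bar>t\<bar> < a n" unfolding S_def by blast
  then show "v \<in> S b" unfolding S_def using assms[of n] by fastforce
qed

lemma S_Rfin: "S a \<subseteq> Rfin" unfolding S_def using Rfin_e Rfin_scale by blast

lemma S_0: assumes "a \<in> seqA" shows "0 \<in> S a"
proof -
  have "a 1 > 0" using assms unfolding seqA_def by auto
  then have "(0::real) *\<^sub>R e 1 \<in> S a" unfolding S_def by fastforce
  then show ?thesis by simp
qed

lemma Useq_Rfin: "Useq as \<subseteq> Rfin"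
proof
  fix v assume "v \<in> Useq as"
  then obtain k x where "v = (\<Sum>i\<le>k. x i)" "\<forall>i\<le>k. x i \<in> S (as i)" unfolding Useq_def by blast
  then show "v \<in> Rfin" using S_Rfin Rfin_sum by (metis atMost_iff subsetD)
qed

lemma S_sub_Useq: "S (as 0) \<subseteq> Useq as"
proof
  fix v assume "v \<in> S (as 0)"
  then have "v \<in> {(\<Sum>i\<le>0. x i) | x. \<forall>i\<le>0. x i \<in> S (as i)}" by (intro CollectI exI[of _ "\<lambda>_. v"]) auto
  then show "v \<in> Useq as" unfolding Useq_def by blast
qed

lemma Useq_mono: assumes "\<And>k n. n \<ge> 1 \<Longrightarrow> as k n \<le> bs k n" shows "Useq as \<subseteq> Useq bs"
proof
  fix v assume "v \<in> Useq as"
  then obtain k x where "v = (\<Sum>i\<le>k. x i)" "\<forall>i\<le>k. x i \<in> S (as i)" unfolding Useq_def by blast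
  moreover have "\<forall>i\<le>k. x i \<in> S (bs i)" using calculation(2) S_mono[of "as _" "bs _"] assms by blast
  ultimately show "v \<in> Useq bs" unfolding Useq_def by blast
qed



lemma seqA_pos: "a \<in> seqA \<Longrightarrow> n \<ge> 1 \<Longrightarrow> a n > 0" unfolding seqA_def by auto

lemma seqA_min: assumes "a \<in> seqA" "b \<in> seqA" shows "(\<lambda>n. min (a n) (b n)) \<in> seqA"
proof -
  have "filterlim (\<lambda>n. min (a n) (b n)) at_top sequentially"
    unfolding filterlim_at_top
  proof
    fix Z :: real
    have "eventually (\<lambda>n. Z \<le> a n) sequentially" "eventually (\<lambda>n. Z \<le> b n) sequentially"
      using assms unfolding seqA_def filterlim_at_top by auto
    then show "eventually (\<lambda>n. Z \<le> min (a n) (b n)) sequentially"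
      by (rule eventually_elim2) simp
  qed
  then show ?thesis using assms unfolding seqA_def by auto
qed

lemma seqA_div: assumes "a \<in> seqA" "c > 0" shows "(\<lambda>n. a n / c) \<in> seqA"
proof -
  have "filterlim (\<lambda>n. a n / c) at_top sequentially"
    unfolding filterlim_at_top
  proof
    fix Z :: real
    have "eventually (\<lambda>n. c * Z \<le> a n) sequentially"
      using assms unfolding seqA_def filterlim_at_top by auto
    then show "eventually (\<lambda>n. Z \<le> a n / c) sequentially"
      by (rule eventually_mono) (use assms in \<open>simp add: field_simps mult.commute\<close>)
  qed
  then show ?thesis using assms unfolding seqA_def by auto
qed

lemma Useq_alt:
  assumes as: "\<And>k. as k \<in> seqA"
  shows "v \<in> Useq as \<longleftrightarrow> (\<exists>K x. (\<forall>i. x i \<in> S (as i)) \<and> (\<forall>i\<ge>K. x i = 0) \<and> v = (\<Sum>i<K. x i))"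
proof
  assume "v \<in> Useq as"
  then obtain k x where kx: "v = (\<Sum>i\<le>k. x i)" "\<forall>i\<le>k. x i \<in> S (as i)" unfolding Useq_def by blast
  define x' where "x' i = (if i \<le> k then x i else 0)" for i
  have "\<forall>i. x' i \<in> S (as i)" using kx(2) S_0[OF as] by (auto simp: x'_def)
  moreover have "\<forall>i\<ge>Suc k. x' i = 0" by (auto simp: x'_def)
  moreover have "v = (\<Sum>i<Suc k. x' i)" unfolding kx(1) lessThan_Suc_atMost
    by (rule sum.cong) (auto simp: x'_def)
  ultimately show "\<exists>K x. (\<forall>i. x i \<in> S (as i)) \<and> (\<forall>i\<ge>K. x i = 0) \<and> v = (\<Sum>i<K. x i)" by blast
next
  assume "\<exists>K x. (\<forall>i. x i \<in> S (as i)) \<and> (\<forall>i\<ge>K. x i = 0) \<and> v = (\<Sum>i<K. x i)"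
  then obtain K x where Kx: "\<forall>i. x i \<in> S (as i)" "v = (\<Sum>i<K. x i)" by blast
  show "v \<in> Useq as"
  proof (cases K)
    case 0
    then have "v = (\<Sum>i\<le>0. (\<lambda>_. 0) i)" using Kx by simp
    moreover have "\<forall>i\<le>0. (\<lambda>_. 0) i \<in> S (as i)" using S_0[OF as] by simp
    ultimately show ?thesis unfolding Useq_def by blast
  next
    case (Suc k)
    then have "v = (\<Sum>i\<le>k. x i)" using Kx by (simp add: lessThan_Suc_atMost)
    then show ?thesis using Kx(1) unfolding Useq_def by blast
  qed
qed

lemma Useq_altD:
  assumes as: "\<forall>k. as k \<in> seqA" and v: "v \<in> Useq as"
  obtains K x where "\<forall>i. x i \<in> S (as i)" "\<forall>i\<ge>K. x i = 0" "v = (\<Sum>i<K. x i)"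
proof -
  have "\<exists>K x. (\<forall>i. x i \<in> S (as i)) \<and> (\<forall>i\<ge>K. x i = 0) \<and> v = (\<Sum>i<K. x i)"
    using Useq_alt[of as v] as v by simp
  then show ?thesis using that by blast
qed

lemma Useq_altI:
  assumes as: "\<forall>k. as k \<in> seqA" and "\<forall>i. x i \<in> S (as i)" "\<forall>i\<ge>K. x i = 0" "v = (\<Sum>i<K. x i)"
  shows "v \<in> Useq as"
proof -
  have "\<exists>K x. (\<forall>i. x i \<in> S (as i)) \<and> (\<forall>i\<ge>K. x i = 0) \<and> v = (\<Sum>i<K. x i)"
    using assms(2-4) by blast
  then show ?thesis using Useq_alt[of as v] as by simp
qed

lemma sum_pad: assumes "\<forall>i\<ge>(K::nat). x i = 0" "K \<le> M" shows "(\<Sum>i<M. x i) = (\<Sum>i<K. (x i::'a::comm_monoid_add))"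
  using assms by (intro sum.mono_neutral_right) (auto simp: not_le[symmetric])

lemma sum_pairs: "(\<Sum>j<2*(n::nat). f j) = (\<Sum>i<n. f (2*i) + (f (2*i+1) :: 'a::comm_monoid_add))"
  by (induction n) (simp_all add: add.assoc)

lemma Useq_half:
  assumes as: "\<And>k. as k \<in> seqA"
  defines "bs \<equiv> \<lambda>k n. min (as (2*k) n) (as (2*k+1) n)"
  shows "\<forall>k. bs k \<in> seqA" "u \<in> Useq bs \<Longrightarrow> w \<in> Useq bs \<Longrightarrow> u + w \<in> Useq as"
proof -
  show bs: "\<forall>k. bs k \<in> seqA" unfolding bs_def using seqA_min as by blast
  assume "u \<in> Useq bs" "w \<in> Useq bs"
  then obtain K x L y where x: "\<forall>i. x i \<in> S (bs i)" "\<forall>i\<ge>K. x i = 0" "u = (\<Sum>i<K. x i)"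
    and y: "\<forall>i. y i \<in> S (bs i)" "\<forall>i\<ge>L. y i = 0" "w = (\<Sum>i<L. y i)"
    using Useq_altD[OF bs] by metis
  define M where "M = max K L"
  define z where "z j = (if even j then x (j div 2) else y (j div 2))" for j
  have "\<forall>j. z j \<in> S (as j)"
  proof
    fix j :: nat
    have jj: "j = 2*(j div 2) \<or> j = 2*(j div 2)+1" by presburger
    have "bs (j div 2) n \<le> as j n" for n
      using jj unfolding bs_def by (metis min.cobounded1 min.cobounded2)
    then have "S (bs (j div 2)) \<subseteq> S (as j)" by (rule S_mono)
    then show "z j \<in> S (as j)" using x(1) y(1) by (auto simp: z_def)
  qed
  moreover have "\<forall>j\<ge>2*M. z j = 0"
  proof (intro allI impI)
    fix j :: nat assume "j \<ge> 2*M"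
    then have "j div 2 \<ge> K" "j div 2 \<ge> L" unfolding M_def by auto
    then show "z j = 0" using x(2) y(2) by (simp add: z_def)
  qed
  moreover have "u + w = (\<Sum>j<2*M. z j)"
  proof -
    have "(\<Sum>j<2*M. z j) = (\<Sum>i<M. x i + y i)" unfolding sum_pairs by (simp add: z_def)
    also have "\<dots> = (\<Sum>i<M. x i) + (\<Sum>i<M. y i)" by (rule sum.distrib)
    also have "\<dots> = u + w" using x y sum_pad[of K x M] sum_pad[of L y M] by (simp add: M_def)
    finally show ?thesis by simp
  qed
  ultimately show "u + w \<in> Useq as" using Useq_altI[of as] as by blast
qed

lemma Useq_scale:
  assumes as: "\<And>k. as k \<in> seqA" and C: "C > 0"
  defines "bs \<equiv> \<lambda>k n. as k n / C"
  shows "\<forall>k. bs k \<in> seqA" "u \<in> Useq bs \<Longrightarrow> \<bar>c\<bar> \<le> C \<Longrightarrow> c *\<^sub>R u \<in> Useq as"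
proof -
  show bs: "\<forall>k. bs k \<in> seqA" unfolding bs_def using seqA_div as C by blast
  assume "u \<in> Useq bs" "\<bar>c\<bar> \<le> C"
  then obtain K x where x: "\<forall>i. x i \<in> S (bs i)" "\<forall>i\<ge>K. x i = 0" "u = (\<Sum>i<K. x i)"
    using Useq_altD[OF bs] by metis
  have "\<forall>i. c *\<^sub>R x i \<in> S (as i)"
  proof
    fix i
    obtain t n where tn: "x i = t *\<^sub>R e n" "n \<ge> 1" "\<bar>t\<bar> < as i n / C" using x(1) unfolding S_def bs_def by blast
    have "\<bar>c * t\<bar> \<le> C * \<bar>t\<bar>" using \<open>\<bar>c\<bar> \<le> C\<close> by (simp add: abs_mult mult_right_mono)
    also have "\<dots> < as i n" using tn(3) C by (simp add: field_simps)
    finally have "(c*t) *\<^sub>R e n \<in> S (as i)" unfolding S_def using tn(2) by blast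
    then show "c *\<^sub>R x i \<in> S (as i)" using tn(1) by simp
  qed
  moreover have "\<forall>i\<ge>K. c *\<^sub>R x i = 0" using x(2) by simp
  moreover have "c *\<^sub>R u = (\<Sum>i<K. c *\<^sub>R x i)" using x(3) by (simp add: scaleR_sum_right)
  moreover have asA: "\<forall>k. as k \<in> seqA" using as by blast
  ultimately show "c *\<^sub>R u \<in> Useq as" by (intro Useq_altI[OF asA, of "\<lambda>i. c *\<^sub>R x i" K]) auto
qed



definition goodB :: "(nat \<Rightarrow> real) set set \<Rightarrow> bool" where
  "goodB B \<longleftrightarrow> B \<noteq> {} \<and> (\<forall>V\<in>B. V \<subseteq> Rfin \<and> 0 \<in> V) \<and>
     (\<forall>V1\<in>B. \<forall>V2\<in>B. \<exists>V\<in>B. V \<subseteq> V1 \<inter> V2) \<and>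
     (\<forall>V\<in>B. \<exists>V'\<in>B. \<forall>x\<in>V'. \<forall>y\<in>V'. x + y \<in> V) \<and>
     (\<forall>V\<in>B. \<forall>C>0. \<exists>V'\<in>B. \<forall>c x. \<bar>c\<bar> \<le> C \<longrightarrow> x \<in> V' \<longrightarrow> c *\<^sub>R x \<in> V) \<and>
     (\<forall>V\<in>B. \<exists>a\<in>seqA. S a \<subseteq> V)"

definition openB :: "(nat \<Rightarrow> real) set set \<Rightarrow> (nat \<Rightarrow> real) set \<Rightarrow> bool" where
  "openB B W \<longleftrightarrow> W \<subseteq> Rfin \<and> (\<forall>x\<in>W. \<exists>V\<in>B. (\<lambda>v. x + v) ` V \<subseteq> W)"

definition topB :: "(nat \<Rightarrow> real) set set \<Rightarrow> (nat \<Rightarrow> real) topology" where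
  "topB B = topology (openB B)"

definition intB :: "(nat \<Rightarrow> real) set set \<Rightarrow> (nat \<Rightarrow> real) set \<Rightarrow> (nat \<Rightarrow> real) set" where
  "intB B V = {z \<in> Rfin. \<exists>V'\<in>B. (\<lambda>v. z + v) ` V' \<subseteq> V}"

context
  fixes B assumes gB: "goodB B"
begin

lemma gB_all: "B \<noteq> {} \<and> (\<forall>V\<in>B. V \<subseteq> Rfin \<and> 0 \<in> V) \<and>
     (\<forall>V1\<in>B. \<forall>V2\<in>B. \<exists>V\<in>B. V \<subseteq> V1 \<inter> V2) \<and>
     (\<forall>V\<in>B. \<exists>V'\<in>B. \<forall>x\<in>V'. \<forall>y\<in>V'. x + y \<in> V) \<and>
     (\<forall>V\<in>B. \<forall>C>0. \<exists>V'\<in>B. \<forall>c x. \<bar>c\<bar> \<le> C \<longrightarrow> x \<in> V' \<longrightarrow> c *\<^sub>R x \<in> V) \<and>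
     (\<forall>V\<in>B. \<exists>a\<in>seqA. S a \<subseteq> V)"
  using gB unfolding goodB_def .

lemma gB_sub: "V \<in> B \<Longrightarrow> V \<subseteq> Rfin" using gB_all by (elim conjE) (drule bspec, assumption, erule conjunct1)
lemma gB_0: "V \<in> B \<Longrightarrow> 0 \<in> V" using gB_all by (elim conjE) (drule bspec, assumption, erule conjunct2)
lemma gB_int: "V1 \<in> B \<Longrightarrow> V2 \<in> B \<Longrightarrow> \<exists>V\<in>B. V \<subseteq> V1 \<inter> V2"
  using gB_all by (elim conjE) (drule bspec, assumption, drule bspec, assumption, assumption)
lemma gB_half: "V \<in> B \<Longrightarrow> \<exists>V'\<in>B. \<forall>x\<in>V'. \<forall>y\<in>V'. x + y \<in> V"
  using gB_all by (elim conjE) (drule bspec, assumption, assumption)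
lemma gB_scale: "V \<in> B \<Longrightarrow> C > 0 \<Longrightarrow> \<exists>V'\<in>B. \<forall>c x. \<bar>c\<bar> \<le> C \<longrightarrow> x \<in> V' \<longrightarrow> c *\<^sub>R x \<in> V"
  using gB_all by (elim conjE) (drule bspec, assumption, drule spec, drule mp, assumption, assumption)
lemma gB_S: "V \<in> B \<Longrightarrow> \<exists>a\<in>seqA. S a \<subseteq> V"
  using gB_all by (elim conjE) (drule bspec, assumption, assumption)
lemma gB_ne: "\<exists>V. V \<in> B" using gB_all by (elim conjE) blast

lemma istop_openB: "istopology (openB B)"
  unfolding istopology_def
proof (intro conjI allI impI)
  fix S T assume S: "openB B S" and T: "openB B T"
  show "openB B (S \<inter> T)" unfolding openB_def
  proof (intro conjI ballI)
    show "S \<inter> T \<subseteq> Rfin" using S unfolding openB_def by blast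
    fix x assume "x \<in> S \<inter> T"
    then have xS: "x \<in> S" and xT: "x \<in> T" by auto
    obtain V1 where V1: "V1 \<in> B" "(\<lambda>v. x + v) ` V1 \<subseteq> S"
      using S xS unfolding openB_def by meson
    obtain V2 where V2: "V2 \<in> B" "(\<lambda>v. x + v) ` V2 \<subseteq> T"
      using T xT unfolding openB_def by meson
    obtain V where V: "V \<in> B" "V \<subseteq> V1 \<inter> V2" using gB_int[OF V1(1) V2(1)] by meson
    have "(\<lambda>v. x + v) ` V \<subseteq> (\<lambda>v. x + v) ` V1" "(\<lambda>v. x + v) ` V \<subseteq> (\<lambda>v. x + v) ` V2"
      using V(2) by (auto intro: image_mono)
    then have "(\<lambda>v. x + v) ` V \<subseteq> S \<inter> T" using V1(2) V2(2) by (meson Int_greatest order_trans)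
    then show "\<exists>V\<in>B. (\<lambda>v. x + v) ` V \<subseteq> S \<inter> T" using V(1) by meson
  qed
next
  fix K assume K: "\<forall>k\<in>K. openB B k"
  show "openB B (\<Union>K)" unfolding openB_def
  proof (intro conjI ballI)
    show "\<Union>K \<subseteq> Rfin" using K unfolding openB_def by blast
    fix x assume "x \<in> \<Union>K"
    then obtain k where "k \<in> K" "x \<in> k" by blast
    then obtain V where V: "V \<in> B" "(\<lambda>v. x + v) ` V \<subseteq> k" using K unfolding openB_def by meson
    have "k \<subseteq> \<Union>K" using \<open>k \<in> K\<close> by (rule Union_upper)
    then show "\<exists>V\<in>B. (\<lambda>v. x + v) ` V \<subseteq> \<Union>K" using V by (meson order_trans)
  qed
qed

lemma openin_topB: "openin (topB B) W \<longleftrightarrow> openB B W"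
  unfolding topB_def using istop_openB by simp

lemma topspace_topB: "topspace (topB B) = Rfin"
proof -
  have "openB B Rfin" unfolding openB_def
  proof (intro conjI ballI)
    fix x assume x: "x \<in> Rfin"
    obtain V where V: "V \<in> B" using gB_ne by blast
    have "(\<lambda>v. x + v) ` V \<subseteq> Rfin" using gB_sub[OF V] x Rfin_add by blast
    then show "\<exists>V\<in>B. (\<lambda>v. x + v) ` V \<subseteq> Rfin" using V by blast
  qed simp
  then have "Rfin \<subseteq> topspace (topB B)" using openin_topB openin_subset by (metis openin_topspace topspace_def Sup_upper mem_Collect_eq)
  moreover have "topspace (topB B) \<subseteq> Rfin" unfolding topspace_def using openin_topB openB_def by blast
  ultimately show ?thesis by blast
qed

lemma intB_open: assumes V: "V \<in> B" shows "openB B (intB B V)"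
  unfolding openB_def
proof (intro conjI ballI)
  show "intB B V \<subseteq> Rfin" unfolding intB_def by (rule Collect_subset)
  fix z assume "z \<in> intB B V"
  then have "z \<in> Rfin \<and> (\<exists>V'\<in>B. (\<lambda>v. z + v) ` V' \<subseteq> V)" unfolding intB_def mem_Collect_eq .
  then obtain V' where z: "z \<in> Rfin" "V' \<in> B" "(\<lambda>v. z + v) ` V' \<subseteq> V" by (elim conjE bexE)
  obtain V'' where V'': "V'' \<in> B" "\<forall>x\<in>V''. \<forall>y\<in>V''. x + y \<in> V'" using gB_half[OF z(2)] by meson
  have "(\<lambda>v. z + v) ` V'' \<subseteq> intB B V"
  proof
    fix w assume "w \<in> (\<lambda>v. z + v) ` V''"
    then obtain v where v: "v \<in> V''" "w = z + v" by (rule imageE) simp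
    have "v \<in> Rfin" using v(1) gB_sub[OF V''(1)] by (rule subsetD[rotated])
    then have "w \<in> Rfin" using v(2) z(1) Rfin_add by simp
    moreover have "(\<lambda>u. w + u) ` V'' \<subseteq> V"
    proof
      fix y assume "y \<in> (\<lambda>u. w + u) ` V''"
      then obtain u where u: "u \<in> V''" "y = w + u" by (rule imageE) simp
      have "v + u \<in> V'" using V''(2) v(1) u(1) by simp
      moreover have "y = z + (v + u)" using u(2) v(2) by (simp add: add.assoc)
      ultimately have "y \<in> (\<lambda>v. z + v) ` V'" by simp
      then show "y \<in> V" using z(3) by blast
    qed
    then have "\<exists>V'\<in>B. (\<lambda>u. w + u) ` V' \<subseteq> V" using V''(1) by (rule bexI)
    ultimately show "w \<in> intB B V" unfolding intB_def mem_Collect_eq by (rule conjI)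
  qed
  then show "\<exists>V0\<in>B. (\<lambda>v. z + v) ` V0 \<subseteq> intB B V" using V''(1) by (rule bexI)
qed

lemma intB_0: "V \<in> B \<Longrightarrow> 0 \<in> intB B V"
  unfolding intB_def using Rfin_0 by auto

lemma intB_sub: "V \<in> B \<Longrightarrow> intB B V \<subseteq> V"
proof
  fix z assume "z \<in> intB B V"
  then obtain V' where "V' \<in> B" "(\<lambda>v. z + v) ` V' \<subseteq> V" unfolding intB_def by blast
  then show "z \<in> V" using gB_0[of V'] by force
qed

lemma openB_trans: assumes x: "x \<in> Rfin" and W: "openB B W" shows "openB B ((\<lambda>v. x + v) ` W)"
  unfolding openB_def
proof (intro conjI ballI)
  show "(\<lambda>v. x + v) ` W \<subseteq> Rfin" using W x Rfin_add unfolding openB_def by blast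
  fix y assume "y \<in> (\<lambda>v. x + v) ` W"
  then obtain w where w: "w \<in> W" "y = x + w" by blast
  then obtain V where V: "V \<in> B" "(\<lambda>v. w + v) ` V \<subseteq> W" using W unfolding openB_def by blast
  have "(\<lambda>v. y + v) ` V \<subseteq> (\<lambda>v. x + v) ` W"
  proof
    fix u assume "u \<in> (\<lambda>v. y + v) ` V"
    then obtain v where "v \<in> V" "u = y + v" by blast
    then have "u = x + (w + v)" "w + v \<in> W" using V w by (auto simp: add.assoc)
    then show "u \<in> (\<lambda>v. x + v) ` W" by blast
  qed
  then show "\<exists>V\<in>B. (\<lambda>v. y + v) ` V \<subseteq> (\<lambda>v. x + v) ` W" using V by blast
qed

lemma nbhd_opens: assumes x: "x \<in> Rfin" and V: "V \<in> B"
  shows "openin (topB B) ((\<lambda>v. x + v) ` intB B V)" "x \<in> (\<lambda>v. x + v) ` intB B V"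
    "(\<lambda>v. x + v) ` intB B V \<subseteq> (\<lambda>v. x + v) ` V"
proof -
  show "openin (topB B) ((\<lambda>v. x + v) ` intB B V)" using openin_topB openB_trans[OF x intB_open[OF V]] by blast
  show "x \<in> (\<lambda>v. x + v) ` intB B V" using intB_0[OF V] by force
  show "(\<lambda>v. x + v) ` intB B V \<subseteq> (\<lambda>v. x + v) ` V" using intB_sub[OF V] by blast
qed

end


context
  fixes B assumes gB: "goodB B"
begin

lemmas gB_sub' = gB_sub[OF gB] and gB_0' = gB_0[OF gB] and gB_int' = gB_int[OF gB]
  and gB_half' = gB_half[OF gB] and gB_scale' = gB_scale[OF gB] and gB_S' = gB_S[OF gB]
  and openin_topB' = openin_topB[OF gB] and topspace_topB' = topspace_topB[OF gB]
  and intB_open' = intB_open[OF gB] and intB_0' = intB_0[OF gB] and intB_sub' = intB_sub[OF gB]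
  and nbhd_opens' = nbhd_opens[OF gB]

lemma absorb_fin:
  assumes "finite F" "\<forall>n\<in>F. n \<ge> 1"
  shows "\<forall>V\<in>B. \<exists>\<delta>>0. \<forall>d. \<bar>d\<bar> < \<delta> \<longrightarrow> d *\<^sub>R (\<Sum>n\<in>F. c n *\<^sub>R e n) \<in> V"
  using assms
proof (induction F rule: finite_induct)
  case empty
  have "\<forall>d. \<bar>d\<bar> < 1 \<longrightarrow> d *\<^sub>R (\<Sum>n\<in>{}. c n *\<^sub>R e n) \<in> V" if "V \<in> B" for V
    using gB_0'[OF that] by (simp only: sum.empty scaleR_zero_right) simp
  then show ?case by (meson zero_less_one)
next
  case (insert m F)
  show ?case
  proof
    fix V assume V: "V \<in> B"
    obtain V' where V': "V' \<in> B" "\<forall>x\<in>V'. \<forall>y\<in>V'. x + y \<in> V" using gB_half'[OF V] by meson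
    obtain \<delta>1 where d1: "\<delta>1 > 0" "\<forall>d. \<bar>d\<bar> < \<delta>1 \<longrightarrow> d *\<^sub>R (\<Sum>n\<in>F. c n *\<^sub>R e n) \<in> V'"
      using insert.IH insert.prems V'(1) by auto
    obtain a where a: "a \<in> seqA" "S a \<subseteq> V'" using gB_S'[OF V'(1)] by meson
    have m1: "m \<ge> 1" using insert.prems by simp
    have am: "a m > 0" using seqA_pos[OF a(1) m1] .
    define \<delta> where "\<delta> = min \<delta>1 (a m / (\<bar>c m\<bar> + 1))"
    have "\<delta> > 0" unfolding \<delta>_def using d1 am by (simp add: add_pos_nonneg)
    moreover have "\<forall>d. \<bar>d\<bar> < \<delta> \<longrightarrow> d *\<^sub>R (\<Sum>n\<in>insert m F. c n *\<^sub>R e n) \<in> V"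
    proof (intro allI impI)
      fix d assume d: "\<bar>d\<bar> < \<delta>"
      have eq: "d *\<^sub>R (\<Sum>n\<in>insert m F. c n *\<^sub>R e n) = (d * c m) *\<^sub>R e m + d *\<^sub>R (\<Sum>n\<in>F. c n *\<^sub>R e n)"
        using insert.hyps by (simp add: scaleR_add_right)
      have "\<bar>d\<bar> < a m / (\<bar>c m\<bar> + 1)" using d unfolding \<delta>_def by simp
      then have "\<bar>d\<bar> * (\<bar>c m\<bar> + 1) < a m" by (simp add: field_simps)
      moreover have "\<bar>d * c m\<bar> \<le> \<bar>d\<bar> * (\<bar>c m\<bar> + 1)" by (simp add: abs_mult mult_left_mono)
      ultimately have "\<bar>d * c m\<bar> < a m" by linarith
      then have "(d * c m) *\<^sub>R e m \<in> S a" unfolding S_def using m1 by blast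
      then have t1: "(d * c m) *\<^sub>R e m \<in> V'" using a(2) by blast
      have t2: "d *\<^sub>R (\<Sum>n\<in>F. c n *\<^sub>R e n) \<in> V'" using d1(2) d unfolding \<delta>_def by simp
      show "d *\<^sub>R (\<Sum>n\<in>insert m F. c n *\<^sub>R e n) \<in> V" unfolding eq using V'(2) t1 t2 by blast
    qed
    ultimately show "\<exists>\<delta>>0. \<forall>d. \<bar>d\<bar> < \<delta> \<longrightarrow> d *\<^sub>R (\<Sum>n\<in>insert m F. c n *\<^sub>R e n) \<in> V" by blast
  qed
qed

lemma absorb: assumes x: "x \<in> Rfin" and V: "V \<in> B"
  shows "\<exists>\<delta>>0. \<forall>d. \<bar>d\<bar> < \<delta> \<longrightarrow> d *\<^sub>R x \<in> V"
proof -
  have fin: "finite {n. x n \<noteq> 0}" and x0: "x 0 = 0" using x unfolding Rfin_def by auto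
  have "\<forall>n\<in>{n. x n \<noteq> 0}. n \<ge> 1"
  proof
    fix n assume "n \<in> {n. x n \<noteq> 0}"
    then have "n \<noteq> 0" using x0 by (metis mem_Collect_eq)
    then show "n \<ge> 1" by simp
  qed
  from absorb_fin[OF fin this, of x] V obtain \<delta> where "\<delta> > 0"
    "\<forall>d. \<bar>d\<bar> < \<delta> \<longrightarrow> d *\<^sub>R (\<Sum>n\<in>{n. x n \<noteq> 0}. x n *\<^sub>R e n) \<in> V" by blast
  then show ?thesis using Rfin_repr[OF x, symmetric] by auto
qed


lemma cont_add: "continuous_map (prod_topology (topB B) (topB B)) (topB B) (\<lambda>(x, y). x + y)"
  unfolding continuous_map
proof (intro conjI allI impI)
  show "(\<lambda>(x, y). x + y) ` topspace (prod_topology (topB B) (topB B)) \<subseteq> topspace (topB B)"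
    using Rfin_add by (auto simp: topspace_topB')
  fix U assume U: "openin (topB B) U"
  then have U': "openB B U" using openin_topB' by simp
  let ?P = "{p \<in> topspace (prod_topology (topB B) (topB B)). (\<lambda>(x, y). x + y) p \<in> U}"
  show "openin (prod_topology (topB B) (topB B)) ?P"
  proof (subst openin_subopen, intro ballI)
    fix p assume p: "p \<in> ?P"
    obtain x y where xy: "p = (x, y)" by (cases p)
    have x: "x \<in> Rfin" and y: "y \<in> Rfin" and xyU: "x + y \<in> U" using p xy by (auto simp: topspace_topB')
    obtain V where V: "V \<in> B" "(\<lambda>v. (x + y) + v) ` V \<subseteq> U" using U' xyU unfolding openB_def by meson
    obtain V' where V': "V' \<in> B" "\<forall>x\<in>V'. \<forall>y\<in>V'. x + y \<in> V" using gB_half'[OF V(1)] by meson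
    let ?T = "((\<lambda>v. x + v) ` intB B V') \<times> ((\<lambda>v. y + v) ` intB B V')"
    have "openin (prod_topology (topB B) (topB B)) ?T"
      using nbhd_opens'(1)[OF x V'(1)] nbhd_opens'(1)[OF y V'(1)] by (simp add: openin_prod_Times_iff)
    moreover have "p \<in> ?T" using nbhd_opens'(2)[OF x V'(1)] nbhd_opens'(2)[OF y V'(1)] xy by simp
    moreover have "?T \<subseteq> ?P"
    proof
      fix q assume "q \<in> ?T"
      then obtain a b where ab: "q = (x + a, y + b)" "a \<in> intB B V'" "b \<in> intB B V'" by blast
      then have ab': "a \<in> V'" "b \<in> V'" using intB_sub'[OF V'(1)] by auto
      then have "a \<in> Rfin" "b \<in> Rfin" using gB_sub'[OF V'(1)] by auto
      then have top: "q \<in> topspace (prod_topology (topB B) (topB B))"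
        using ab(1) x y Rfin_add by (simp add: topspace_topB')
      have "a + b \<in> V" using V'(2) ab' by blast
      then have "(x + y) + (a + b) \<in> U" using V(2) by blast
      moreover have "(x + y) + (a + b) = (x + a) + (y + b)" by (simp add: algebra_simps)
      ultimately show "q \<in> ?P" using top ab(1) by simp
    qed
    ultimately show "\<exists>T. openin (prod_topology (topB B) (topB B)) T \<and> p \<in> T \<and> T \<subseteq> ?P" by blast
  qed
qed

lemma cont_scale: "continuous_map (prod_topology euclideanreal (topB B)) (topB B) (\<lambda>(c, x). c *\<^sub>R x)"
  unfolding continuous_map
proof (intro conjI allI impI)
  show "(\<lambda>(c, x). c *\<^sub>R x) ` topspace (prod_topology euclideanreal (topB B)) \<subseteq> topspace (topB B)"
    using Rfin_scale by (auto simp: topspace_topB')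
  fix U assume U: "openin (topB B) U"
  then have U': "openB B U" using openin_topB' by simp
  let ?P = "{p \<in> topspace (prod_topology euclideanreal (topB B)). (\<lambda>(c, x). c *\<^sub>R x) p \<in> U}"
  show "openin (prod_topology euclideanreal (topB B)) ?P"
  proof (subst openin_subopen, intro ballI)
    fix p assume p: "p \<in> ?P"
    obtain c x where cx: "p = (c, x)" by (cases p)
    have x: "x \<in> Rfin" and cxU: "c *\<^sub>R x \<in> U" using p cx by (auto simp: topspace_topB')
    obtain V where V: "V \<in> B" "(\<lambda>v. c *\<^sub>R x + v) ` V \<subseteq> U" using U' cxU unfolding openB_def by meson
    obtain V' where V': "V' \<in> B" "\<forall>x\<in>V'. \<forall>y\<in>V'. x + y \<in> V" using gB_half'[OF V(1)] by meson
    obtain V1 where V1: "V1 \<in> B" "\<forall>c' z. \<bar>c'\<bar> \<le> \<bar>c\<bar> + 1 \<longrightarrow> z \<in> V1 \<longrightarrow> c' *\<^sub>R z \<in> V'"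
    proof -
      have "\<bar>c\<bar> + 1 > 0" by simp
      from gB_scale'[OF V'(1) this] show ?thesis using that by blast
    qed
    obtain \<delta> where d: "\<delta> > 0" "\<forall>d. \<bar>d\<bar> < \<delta> \<longrightarrow> d *\<^sub>R x \<in> V'" using absorb[OF x V'(1)] by meson
    define r where "r = min \<delta> 1"
    let ?T = "ball c r \<times> ((\<lambda>v. x + v) ` intB B V1)"
    have "openin euclideanreal (ball c r)" using open_ball open_openin by blast
    then have "openin (prod_topology euclideanreal (topB B)) ?T"
      using nbhd_opens'(1)[OF x V1(1)] by (simp add: openin_prod_Times_iff)
    moreover have "p \<in> ?T" using nbhd_opens'(2)[OF x V1(1)] cx d(1) by (simp add: r_def)
    moreover have "?T \<subseteq> ?P"
    proof
      fix q assume "q \<in> ?T"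
      then obtain c' z where cz: "q = (c', x + z)" "c' \<in> ball c r" "z \<in> intB B V1" by blast
      then have z: "z \<in> V1" using intB_sub'[OF V1(1)] by auto
      then have "z \<in> Rfin" using gB_sub'[OF V1(1)] by auto
      then have top: "q \<in> topspace (prod_topology euclideanreal (topB B))"
        using cz(1) x Rfin_add by (simp add: topspace_topB')
      have dc: "\<bar>c' - c\<bar> < \<delta>" "\<bar>c'\<bar> \<le> \<bar>c\<bar> + 1" using cz(2) unfolding r_def by (auto simp: dist_real_def)
      have "(c' - c) *\<^sub>R x \<in> V'" using d(2) dc(1) by blast
      moreover have "c' *\<^sub>R z \<in> V'" using V1(2) dc(2) z by blast
      ultimately have "(c' - c) *\<^sub>R x + c' *\<^sub>R z \<in> V" using V'(2) by blast
      then have "c *\<^sub>R x + ((c' - c) *\<^sub>R x + c' *\<^sub>R z) \<in> U" using V(2) by blast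
      moreover have "c *\<^sub>R x + ((c' - c) *\<^sub>R x + c' *\<^sub>R z) = c' *\<^sub>R (x + z)"
        by (simp add: algebra_simps)
      ultimately show "q \<in> ?P" using top cz(1) by simp
    qed
    ultimately show "\<exists>T. openin (prod_topology euclideanreal (topB B)) T \<and> p \<in> T \<and> T \<subseteq> ?P" by blast
  qed
qed

lemma enull_topB: "e_null (topB B)"
  unfolding e_null_def limitin_def
proof (intro conjI allI impI)
  show "0 \<in> topspace (topB B)" using Rfin_0 topspace_topB' by simp
  fix U assume U: "openin (topB B) U \<and> 0 \<in> U"
  then obtain V where V: "V \<in> B" "(\<lambda>v. 0 + v) ` V \<subseteq> U" using openin_topB' unfolding openB_def by meson
  then have VU: "V \<subseteq> U" by simp
  obtain a where a: "a \<in> seqA" "S a \<subseteq> V" using gB_S'[OF V(1)] by meson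
  have "eventually (\<lambda>n. 2 \<le> a n) sequentially" using a(1) unfolding seqA_def filterlim_at_top by auto
  moreover have "eventually (\<lambda>n. (1::nat) \<le> n) sequentially" by (rule eventually_ge_at_top)
  ultimately show "eventually (\<lambda>n. e n \<in> U) sequentially"
  proof (rule eventually_elim2)
    fix n assume "2 \<le> a n" "(1::nat) \<le> n"
    then have "\<bar>1::real\<bar> < a n" by simp
    then have "(1::real) *\<^sub>R e n \<in> S a" unfolding S_def using \<open>1 \<le> n\<close> by blast
    then show "e n \<in> U" using a(2) VU by auto
  qed
qed

lemma vt_topB: "vector_topology (topB B)"
  unfolding vector_topology_def using topspace_topB' cont_add cont_scale by blast

lemma nbhd_topB: "V \<in> B \<Longrightarrow> nbhd (topB B) 0 V"
  unfolding nbhd_def using openin_topB' intB_open' intB_0' intB_sub' by blast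

lemma intB_convex: assumes V: "V \<in> B" "convex V" shows "convex (intB B V)"
proof (rule convexI)
  fix z1 z2 u v assume z: "z1 \<in> intB B V" "z2 \<in> intB B V" and uv: "0 \<le> u" "0 \<le> v" "u + v = (1::real)"
  obtain V1 where V1: "z1 \<in> Rfin" "V1 \<in> B" "(\<lambda>w. z1 + w) ` V1 \<subseteq> V" using z(1) unfolding intB_def by blast
  obtain V2 where V2: "z2 \<in> Rfin" "V2 \<in> B" "(\<lambda>w. z2 + w) ` V2 \<subseteq> V" using z(2) unfolding intB_def by blast
  obtain V3 where V3: "V3 \<in> B" "V3 \<subseteq> V1 \<inter> V2" using gB_int'[OF V1(2) V2(2)] by meson
  have "u *\<^sub>R z1 + v *\<^sub>R z2 \<in> Rfin" using convexD[OF convex_Rfin V1(1) V2(1) uv] .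
  moreover have "(\<lambda>w. (u *\<^sub>R z1 + v *\<^sub>R z2) + w) ` V3 \<subseteq> V"
  proof
    fix y assume "y \<in> (\<lambda>w. (u *\<^sub>R z1 + v *\<^sub>R z2) + w) ` V3"
    then obtain w where w: "w \<in> V3" "y = (u *\<^sub>R z1 + v *\<^sub>R z2) + w" by blast
    have "z1 + w \<in> V" "z2 + w \<in> V" using w(1) V3(2) V1(3) V2(3) by blast+
    then have "u *\<^sub>R (z1 + w) + v *\<^sub>R (z2 + w) \<in> V" using convexD[OF V(2) _ _ uv] by blast
    moreover have "u *\<^sub>R (z1 + w) + v *\<^sub>R (z2 + w) = u *\<^sub>R z1 + v *\<^sub>R z2 + (u + v) *\<^sub>R w"
      by (simp add: algebra_simps)
    ultimately show "y \<in> V" using w(2) uv(3) by simp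
  qed
  ultimately show "u *\<^sub>R z1 + v *\<^sub>R z2 \<in> intB B V" unfolding intB_def using V3(1) by blast
qed

lemma lcvt_topB: assumes cv: "\<forall>V\<in>B. convex V" shows "locally_convex_vector_topology (topB B)"
  unfolding locally_convex_vector_topology_def
proof (intro conjI allI impI)
  show "vector_topology (topB B)" by (rule vt_topB)
  fix U assume U: "openin (topB B) U \<and> 0 \<in> U"
  then obtain V where V: "V \<in> B" "(\<lambda>v. 0 + v) ` V \<subseteq> U" using openin_topB' unfolding openB_def by meson
  then have VU: "V \<subseteq> U" by simp
  show "\<exists>W. openin (topB B) W \<and> convex W \<and> 0 \<in> W \<and> W \<subseteq> U"
    using openin_topB' intB_open'[OF V(1)] intB_convex[OF V(1)] cv V(1) intB_0'[OF V(1)] intB_sub'[OF V(1)] VU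
    by blast
qed

end


lemma VT_add_half:
  assumes T: "vector_topology T" and W: "openin T W" "0 \<in> W"
  shows "\<exists>P. openin T P \<and> 0 \<in> P \<and> (\<forall>x\<in>P. \<forall>y\<in>P. x + y \<in> W)"
proof -
  have cm: "continuous_map (prod_topology T T) T (\<lambda>(x, y). x + y)" and top: "topspace T = Rfin"
    using T unfolding vector_topology_def by auto
  have op: "openin (prod_topology T T) {p \<in> topspace (prod_topology T T). (\<lambda>(x, y). x + y) p \<in> W}"
    by (rule openin_continuous_map_preimage[OF cm W(1)])
  have "(0, 0) \<in> {p \<in> topspace (prod_topology T T). (\<lambda>(x, y). x + y) p \<in> W}"
    using W(2) top Rfin_0 by (simp only: mem_Collect_eq topspace_prod_topology mem_Times_iff fst_conv snd_conv case_prod_conv add_0_left)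
  from op[unfolded openin_prod_topology_alt, rule_format, OF this]
  obtain U V where UV: "openin T U" "openin T V" "0 \<in> U" "0 \<in> V"
    "U \<times> V \<subseteq> {p \<in> topspace (prod_topology T T). (\<lambda>(x, y). x + y) p \<in> W}"
    by (elim exE conjE)
  have "\<forall>x\<in>U \<inter> V. \<forall>y\<in>U \<inter> V. x + y \<in> W"
  proof (intro ballI)
    fix x y assume "x \<in> U \<inter> V" "y \<in> U \<inter> V"
    then have "(x, y) \<in> U \<times> V" by simp
    with UV(5) have "(x, y) \<in> {p \<in> topspace (prod_topology T T). (\<lambda>(x, y). x + y) p \<in> W}" by (rule subsetD)
    then show "x + y \<in> W" by simp
  qed
  moreover have "openin T (U \<inter> V)" using UV(1,2) by (rule openin_Int)
  moreover have "0 \<in> U \<inter> V" using UV(3,4) by (rule IntI)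
  ultimately show ?thesis by (intro exI[of _ "U \<inter> V"] conjI)
qed

lemma VT_cmul: assumes T: "vector_topology T" shows "continuous_map T T (\<lambda>x. r *\<^sub>R x)"
proof -
  have cm: "continuous_map (prod_topology euclideanreal T) T (\<lambda>(c, x). c *\<^sub>R x)"
    using T unfolding vector_topology_def by auto
  have "continuous_map T (prod_topology euclideanreal T) (\<lambda>x. (r, x))"
    unfolding continuous_map_pairwise by (simp add: o_def)
  from continuous_map_compose[OF this cm] show ?thesis by (simp add: o_def)
qed

lemma VT_line: assumes T: "vector_topology T" and x: "x \<in> Rfin"
  shows "continuous_map euclideanreal T (\<lambda>c. c *\<^sub>R x)"
proof -
  have cm: "continuous_map (prod_topology euclideanreal T) T (\<lambda>(c, x). c *\<^sub>R x)" and top: "topspace T = Rfin"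
    using T unfolding vector_topology_def by auto
  have "continuous_map euclideanreal (prod_topology euclideanreal T) (\<lambda>c. (c, x))"
    unfolding continuous_map_pairwise using x top by (simp add: o_def)
  from continuous_map_compose[OF this cm] show ?thesis by (simp add: o_def)
qed

lemma VT_scal0:
  assumes T: "vector_topology T" and Q: "openin T Q" "0 \<in> Q"
  shows "\<exists>\<delta>>0. \<exists>Ob. openin T Ob \<and> 0 \<in> Ob \<and> (\<forall>l x. \<bar>l\<bar> < \<delta> \<longrightarrow> x \<in> Ob \<longrightarrow> l *\<^sub>R x \<in> Q)"
proof -
  have cm: "continuous_map (prod_topology euclideanreal T) T (\<lambda>(c, x). c *\<^sub>R x)" and top: "topspace T = Rfin"
    using T unfolding vector_topology_def by auto
  have op: "openin (prod_topology euclideanreal T) {p \<in> topspace (prod_topology euclideanreal T). (\<lambda>(c, x). c *\<^sub>R x) p \<in> Q}"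
    by (rule openin_continuous_map_preimage[OF cm Q(1)])
  have "(0, 0) \<in> {p \<in> topspace (prod_topology euclideanreal T). (\<lambda>(c, x). c *\<^sub>R x) p \<in> Q}"
    using Q(2) top Rfin_0 by (simp only: mem_Collect_eq topspace_prod_topology mem_Times_iff fst_conv snd_conv case_prod_conv scaleR_zero_left topspace_euclidean UNIV_I)
  from op[unfolded openin_prod_topology_alt, rule_format, OF this]
  obtain U Ob where UO: "openin euclideanreal U" "openin T Ob" "0 \<in> U" "0 \<in> Ob"
    "U \<times> Ob \<subseteq> {p \<in> topspace (prod_topology euclideanreal T). (\<lambda>(c, x). c *\<^sub>R x) p \<in> Q}"
    by (elim exE conjE)
  have "open U" using UO(1) open_openin by blast
  then obtain \<delta> where d: "\<delta> > 0" "ball 0 \<delta> \<subseteq> U" using UO(3) open_contains_ball by blast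
  have "\<forall>l x. \<bar>l\<bar> < \<delta> \<longrightarrow> x \<in> Ob \<longrightarrow> l *\<^sub>R x \<in> Q"
  proof (intro allI impI)
    fix l x assume "\<bar>l\<bar> < \<delta>" "x \<in> Ob"
    then have "(l, x) \<in> U \<times> Ob" using d(2) by (auto simp: dist_real_def)
    with UO(5) have "(l, x) \<in> {p \<in> topspace (prod_topology euclideanreal T). (\<lambda>(c, x). c *\<^sub>R x) p \<in> Q}" by (rule subsetD)
    then show "l *\<^sub>R x \<in> Q" by simp
  qed
  then show ?thesis using d(1) UO(2,4) by blast
qed

lemma VT_S:
  assumes T: "vector_topology T" and en: "e_null T" and Q: "openin T Q" "0 \<in> Q"
  shows "\<exists>a\<in>seqA. S a \<subseteq> Q"
proof -
  have top: "topspace T = Rfin" using T unfolding vector_topology_def by auto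
  obtain \<delta> Ob where dO: "\<delta> > 0" "openin T Ob" "0 \<in> Ob" "\<forall>l x. \<bar>l\<bar> < \<delta> \<longrightarrow> x \<in> Ob \<longrightarrow> l *\<^sub>R x \<in> Q"
    using VT_scal0[OF T Q] by blast
  define good where "good n C \<longleftrightarrow> (\<forall>t. \<bar>t\<bar> \<le> real C \<longrightarrow> t *\<^sub>R e n \<in> Q)" for n C
  have ev: "eventually (\<lambda>n. good n C) sequentially" for C :: nat
  proof -
    define r where "r = 2 * (real C + 1) / \<delta>"
    have r: "r > 0" unfolding r_def using dO(1) by simp
    let ?Ob' = "{x \<in> topspace T. r *\<^sub>R x \<in> Ob}"
    have "openin T ?Ob'" by (rule openin_continuous_map_preimage[OF VT_cmul[OF T] dO(2)])
    moreover have "0 \<in> ?Ob'" using dO(3) top Rfin_0 by simp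
    ultimately have "eventually (\<lambda>n. e n \<in> ?Ob') sequentially" using en unfolding e_null_def limitin_def by blast
    then show ?thesis
    proof (rule eventually_mono)
      fix n assume "e n \<in> ?Ob'"
      then have rO: "r *\<^sub>R e n \<in> Ob" by simp
      show "good n C" unfolding good_def
      proof (intro allI impI)
        fix t assume t: "\<bar>t\<bar> \<le> real C"
        have "\<bar>t / r\<bar> = \<bar>t\<bar> * \<delta> / (2 * (real C + 1))" unfolding r_def using dO(1) by (simp add: abs_mult abs_divide)
        also have "\<dots> < \<delta>"
        proof -
          have "\<bar>t\<bar> * \<delta> < 2 * (real C + 1) * \<delta>" using t dO(1) by (intro mult_strict_right_mono) auto
          then show ?thesis by (simp add: field_simps)
        qed
        finally have "(t / r) *\<^sub>R (r *\<^sub>R e n) \<in> Q" using dO(4) rO by blast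
        then show "t *\<^sub>R e n \<in> Q" using r by simp
      qed
    qed
  qed
  have "\<forall>n. \<exists>\<epsilon>. n \<ge> 1 \<longrightarrow> \<epsilon> > 0 \<and> (\<forall>t. \<bar>t\<bar> < \<epsilon> \<longrightarrow> t *\<^sub>R e n \<in> Q)"
  proof
    fix n
    show "\<exists>\<epsilon>. n \<ge> 1 \<longrightarrow> \<epsilon> > 0 \<and> (\<forall>t. \<bar>t\<bar> < \<epsilon> \<longrightarrow> t *\<^sub>R e n \<in> Q)"
    proof (cases "n \<ge> 1")
      case True
      have "openin euclideanreal {c \<in> topspace euclideanreal. c *\<^sub>R e n \<in> Q}"
        by (rule openin_continuous_map_preimage[OF VT_line[OF T Rfin_e[OF True]] Q(1)])
      then have "open {c. c *\<^sub>R e n \<in> Q}" using open_openin by simp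
      moreover have "0 \<in> {c. c *\<^sub>R e n \<in> Q}" using Q(2) by simp
      ultimately obtain \<epsilon> where "\<epsilon> > 0" "ball 0 \<epsilon> \<subseteq> {c. c *\<^sub>R e n \<in> Q}" using open_contains_ball by blast
      then show ?thesis by (auto simp: dist_real_def subset_iff)
    qed auto
  qed
  then obtain \<epsilon> where eps: "\<And>n. n \<ge> 1 \<Longrightarrow> \<epsilon> n > 0" "\<And>n t. n \<ge> 1 \<Longrightarrow> \<bar>t\<bar> < \<epsilon> n \<Longrightarrow> t *\<^sub>R e n \<in> Q"
    by metis
  define G where "G n = {C. C \<le> n \<and> good n C}" for n
  have finG: "finite (G n)" for n unfolding G_def by simp
  have G0: "0 \<in> G n" for n unfolding G_def good_def using Q(2) by simp
  define g where "g n = Max (G n)" for n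
  have gG: "g n \<in> G n" for n unfolding g_def using finG G0 by (intro Max_in) auto
  have gge: "C \<in> G n \<Longrightarrow> C \<le> g n" for n C unfolding g_def using finG by simp
  define a where "a n = max (\<epsilon> n) (real (g n))" for n
  have "a \<in> seqA" unfolding seqA_def
  proof (intro CollectI conjI allI impI)
    fix n :: nat assume "n \<ge> 1" then show "0 < a n" unfolding a_def using eps(1) by (simp add: less_max_iff_disj)
  next
    show "filterlim a at_top sequentially" unfolding filterlim_at_top
    proof
      fix Z :: real
      define C where "C = nat \<lceil>Z\<rceil>"
      have "eventually (\<lambda>n. good n C \<and> C \<le> n) sequentially"
        using ev[of C] eventually_ge_at_top[of C] by (rule eventually_conj)
      then show "eventually (\<lambda>n. Z \<le> a n) sequentially"
      proof (rule eventually_mono)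
        fix n assume "good n C \<and> C \<le> n"
        then have "C \<le> g n" using gge unfolding G_def by blast
        then have "Z \<le> real (g n)" unfolding C_def by linarith
        then show "Z \<le> a n" unfolding a_def by simp
      qed
    qed
  qed
  moreover have "S a \<subseteq> Q"
  proof
    fix v assume "v \<in> S a"
    then obtain t n where tn: "v = t *\<^sub>R e n" "n \<ge> 1" "\<bar>t\<bar> < a n" unfolding S_def by blast
    show "v \<in> Q"
    proof (cases "\<bar>t\<bar> < \<epsilon> n")
      case True then show ?thesis using eps(2) tn by blast
    next
      case False
      then have "\<bar>t\<bar> \<le> real (g n)" using tn(3) unfolding a_def by linarith
      moreover have "good n (g n)" using gG unfolding G_def by blast
      ultimately show ?thesis unfolding good_def using tn(1) by blast
    qed
  qed
  ultimately show ?thesis by blast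
qed

lemma VT_Ns:
  assumes T: "vector_topology T" and en: "e_null T" and W: "openin T W" "0 \<in> W"
  shows "\<exists>V\<in>N_s. V \<subseteq> W"
proof -
  have "\<forall>W. \<exists>P. openin T W \<and> 0 \<in> W \<longrightarrow> openin T P \<and> 0 \<in> P \<and> (\<forall>x\<in>P. \<forall>y\<in>P. x + y \<in> W)"
    using VT_add_half[OF T] by blast
  then obtain f where f: "\<And>W. openin T W \<Longrightarrow> 0 \<in> W \<Longrightarrow> openin T (f W) \<and> 0 \<in> f W \<and> (\<forall>x\<in>f W. \<forall>y\<in>f W. x + y \<in> W)"
    by metis
  define Q where "Q n = (f ^^ n) W" for n
  have Q0: "Q 0 = W" unfolding Q_def by simp
  have QS: "Q (Suc n) = f (Q n)" for n unfolding Q_def by simp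
  have Qo: "openin T (Q n) \<and> 0 \<in> Q n" for n
  proof (induction n)
    case 0 show ?case unfolding Q0 using W by (rule conjI)
  next
    case (Suc n) show ?case unfolding QS using f Suc.IH by blast
  qed
  have Qs: "\<forall>x\<in>Q (Suc n). \<forall>y\<in>Q (Suc n). x + y \<in> Q n" for n
    unfolding QS using f Qo[of n] by blast
  have Qsub: "x \<in> Q (Suc n) \<Longrightarrow> x \<in> Q n" for x n
    using Qs[of n] Qo[of "Suc n"] by (metis add.right_neutral)
  have "\<forall>k. \<exists>a. a \<in> seqA \<and> S a \<subseteq> Q (Suc k)"
    using VT_S[OF T en] Qo by blast
  then obtain as where as: "\<And>k. as k \<in> seqA" "\<And>k. S (as k) \<subseteq> Q (Suc k)" by metis
  have sums: "\<forall>j x. (\<forall>i\<le>k. x i \<in> Q (Suc (j + i))) \<longrightarrow> (\<Sum>i\<le>k. x i) \<in> Q j" for k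
  proof (induction k)
    case 0
    show ?case
    proof (intro allI impI)
      fix j and x :: "nat \<Rightarrow> nat \<Rightarrow> real" assume "\<forall>i\<le>0. x i \<in> Q (Suc (j + i))"
      then have "x 0 \<in> Q (Suc j)" by simp
      then have "x 0 \<in> Q j" by (rule Qsub)
      then show "(\<Sum>i\<le>0. x i) \<in> Q j" by simp
    qed
  next
    case (Suc k)
    show ?case
    proof (intro allI impI)
      fix j and x :: "nat \<Rightarrow> nat \<Rightarrow> real" assume h: "\<forall>i\<le>Suc k. x i \<in> Q (Suc (j + i))"
      have "\<forall>i\<le>k. x (Suc i) \<in> Q (Suc (Suc j + i))" using h by auto
      then have s1: "(\<Sum>i\<le>k. x (Suc i)) \<in> Q (Suc j)" using Suc.IH[THEN spec[of _ "Suc j"], THEN spec[of _ "\<lambda>i. x (Suc i)"]] by blast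
      have s0: "x 0 \<in> Q (Suc j)" using h by auto
      have "(\<Sum>i\<le>Suc k. x i) = x 0 + (\<Sum>i\<le>k. x (Suc i))" by (rule sum.atMost_Suc_shift)
      then show "(\<Sum>i\<le>Suc k. x i) \<in> Q j" using Qs[of j] s0 s1 by simp
    qed
  qed
  have "Useq as \<subseteq> W"
  proof
    fix v assume "v \<in> Useq as"
    then obtain k x where kx: "v = (\<Sum>i\<le>k. x i)" "\<forall>i\<le>k. x i \<in> S (as i)" unfolding Useq_def by blast
    then have "\<forall>i\<le>k. x i \<in> Q (Suc (0 + i))" using as(2) by auto
    then have "v \<in> Q 0" using sums kx(1) by blast
    then show "v \<in> W" unfolding Q0 .
  qed
  moreover have "Useq as \<in> N_s" unfolding N_s_def using as(1) by blast
  ultimately show ?thesis by blast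
qed



lemma real_seqA: "(\<lambda>n. real n) \<in> seqA"
  unfolding seqA_def using filterlim_real_sequentially by auto

lemma Useq_in_Ns: "\<forall>k. bs k \<in> seqA \<Longrightarrow> Useq bs \<in> N_s"
  unfolding N_s_def by blast

lemma N_sE: assumes "V \<in> N_s" obtains as where "\<forall>k. as k \<in> seqA" "V = Useq as"
  using assms unfolding N_s_def by blast

lemma good_Ns: "goodB N_s"
  unfolding goodB_def
proof (intro conjI ballI allI impI)
  have "Useq (\<lambda>k n. real n) \<in> N_s" using real_seqA by (intro Useq_in_Ns) simp
  then show "N_s \<noteq> {}" by blast
next
  fix V assume "V \<in> N_s"
  then obtain as where as0: "\<forall>k. as k \<in> seqA" "V = Useq as" by (rule N_sE)
  then have as: "\<And>k. as k \<in> seqA" "V = Useq as" by auto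
  show "V \<subseteq> Rfin" using as Useq_Rfin by simp
  show "0 \<in> V" using as S_0[OF as(1)] S_sub_Useq by blast
  show "\<exists>a\<in>seqA. S a \<subseteq> V" using as S_sub_Useq by blast
  show "\<exists>V'\<in>N_s. \<forall>x\<in>V'. \<forall>y\<in>V'. x + y \<in> V"
  proof -
    define bs where "bs = (\<lambda>k n. min (as (2*k) n) (as (2*k+1) n))"
    have "\<forall>k. bs k \<in> seqA" "\<And>u w. u \<in> Useq bs \<Longrightarrow> w \<in> Useq bs \<Longrightarrow> u + w \<in> Useq as"
      using Useq_half[of as] as(1) unfolding bs_def by blast+
    then show ?thesis unfolding as(2) by (intro bexI[of _ "Useq bs"] Useq_in_Ns) auto
  qed
  fix C :: real assume C: "C > 0"
  show "\<exists>V'\<in>N_s. \<forall>c x. \<bar>c\<bar> \<le> C \<longrightarrow> x \<in> V' \<longrightarrow> c *\<^sub>R x \<in> V"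
  proof -
    define bs where "bs = (\<lambda>k n. as k n / C)"
    have "\<forall>k. bs k \<in> seqA" "\<And>u c. u \<in> Useq bs \<Longrightarrow> \<bar>c\<bar> \<le> C \<Longrightarrow> c *\<^sub>R u \<in> Useq as"
      using Useq_scale[of as C] as(1) C unfolding bs_def by blast+
    then show ?thesis unfolding as(2) by (intro bexI[of _ "Useq bs"] Useq_in_Ns) auto
  qed
next
  fix V1 V2 assume "V1 \<in> N_s" "V2 \<in> N_s"
  obtain as where as0: "\<forall>k. as k \<in> seqA" "V1 = Useq as" using \<open>V1 \<in> N_s\<close> by (rule N_sE)
  obtain bs where bs0: "\<forall>k. bs k \<in> seqA" "V2 = Useq bs" using \<open>V2 \<in> N_s\<close> by (rule N_sE)
  have as: "\<And>k. as k \<in> seqA" "V1 = Useq as" and bs: "\<And>k. bs k \<in> seqA" "V2 = Useq bs" using as0 bs0 by auto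
  define cs where "cs = (\<lambda>k n. min (as k n) (bs k n))"
  have "\<forall>k. cs k \<in> seqA" unfolding cs_def using seqA_min as bs by blast
  moreover have "Useq cs \<subseteq> V1" "Useq cs \<subseteq> V2" unfolding as(2) bs(2) cs_def by (rule Useq_mono; simp)+
  ultimately show "\<exists>V\<in>N_s. V \<subseteq> V1 \<inter> V2" by (intro bexI[of _ "Useq cs"] Useq_in_Ns) auto
qed

definition CN :: "(nat \<Rightarrow> real) set set" where "CN = {convex hull V | V. V \<in> N_s}"

lemma CN_I: "V \<in> N_s \<Longrightarrow> convex hull V \<in> CN" unfolding CN_def by blast
lemma CN_E: assumes "W \<in> CN" obtains V where "V \<in> N_s" "W = convex hull V" using assms unfolding CN_def by blast

lemma scale_hull: assumes "\<forall>c x. \<bar>c\<bar> \<le> C \<longrightarrow> x \<in> V' \<longrightarrow> c *\<^sub>R x \<in> V" "\<bar>c\<bar> \<le> C" "x \<in> convex hull V'"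
  shows "c *\<^sub>R x \<in> convex hull V"
proof -
  have "c *\<^sub>R x \<in> (\<lambda>x. c *\<^sub>R x) ` (convex hull V')" using assms(3) by blast
  also have "\<dots> = convex hull ((\<lambda>x. c *\<^sub>R x) ` V')" by (rule convex_hull_scaling[symmetric])
  also have "\<dots> \<subseteq> convex hull V" using assms(1,2) by (intro hull_mono) blast
  finally show ?thesis .
qed

lemma good_CN: "goodB CN"
  unfolding goodB_def
proof (intro conjI ballI allI impI)
  obtain V where "V \<in> N_s" using gB_ne[OF good_Ns] by blast
  then show "CN \<noteq> {}" using CN_I by blast
next
  fix W assume "W \<in> CN"
  then obtain V where V: "V \<in> N_s" "W = convex hull V" by (rule CN_E)
  show "W \<subseteq> Rfin" unfolding V(2) using gB_sub[OF good_Ns V(1)] convex_Rfin by (rule hull_minimal)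
  show "0 \<in> W" unfolding V(2) using gB_0[OF good_Ns V(1)] hull_subset[of V convex] by (rule subsetD[rotated])
  show "\<exists>a\<in>seqA. S a \<subseteq> W" unfolding V(2) using gB_S[OF good_Ns V(1)] hull_subset[of V convex] by (meson order_trans)
  show "\<exists>V'\<in>CN. \<forall>x\<in>V'. \<forall>y\<in>V'. x + y \<in> W"
  proof -
    obtain V' where V': "V' \<in> N_s" "\<forall>c x. \<bar>c\<bar> \<le> 2 \<longrightarrow> x \<in> V' \<longrightarrow> c *\<^sub>R x \<in> V"
      using gB_scale[OF good_Ns V(1), of 2] by auto
    have "\<forall>x\<in>convex hull V'. \<forall>y\<in>convex hull V'. x + y \<in> W"
    proof (intro ballI)
      fix x y assume xy: "x \<in> convex hull V'" "y \<in> convex hull V'"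
      have "(2::real) *\<^sub>R x \<in> convex hull V" "(2::real) *\<^sub>R y \<in> convex hull V"
        using scale_hull[OF V'(2) _ xy(1)] scale_hull[OF V'(2) _ xy(2)] by auto
      then have "(1/2::real) *\<^sub>R ((2::real) *\<^sub>R x) + (1/2::real) *\<^sub>R ((2::real) *\<^sub>R y) \<in> convex hull V"
        by (intro convexD[OF convex_convex_hull]) auto
      then show "x + y \<in> W" unfolding V(2) by simp
    qed
    moreover have "convex hull V' \<in> CN" using V'(1) by (rule CN_I)
    ultimately show ?thesis by blast
  qed
  fix C :: real assume C: "C > 0"
  show "\<exists>V'\<in>CN. \<forall>c x. \<bar>c\<bar> \<le> C \<longrightarrow> x \<in> V' \<longrightarrow> c *\<^sub>R x \<in> W"
  proof -
    obtain V' where V': "V' \<in> N_s" "\<forall>c x. \<bar>c\<bar> \<le> C \<longrightarrow> x \<in> V' \<longrightarrow> c *\<^sub>R x \<in> V"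
      using gB_scale[OF good_Ns V(1) C] by auto
    have "\<forall>c x. \<bar>c\<bar> \<le> C \<longrightarrow> x \<in> convex hull V' \<longrightarrow> c *\<^sub>R x \<in> W"
      unfolding V(2) using scale_hull[OF V'(2)] by blast
    moreover have "convex hull V' \<in> CN" using V'(1) by (rule CN_I)
    ultimately show ?thesis by blast
  qed
next
  fix W1 W2 assume "W1 \<in> CN" "W2 \<in> CN"
  obtain V1 where V1: "V1 \<in> N_s" "W1 = convex hull V1" using \<open>W1 \<in> CN\<close> by (rule CN_E)
  obtain V2 where V2: "V2 \<in> N_s" "W2 = convex hull V2" using \<open>W2 \<in> CN\<close> by (rule CN_E)
  note V = V1 V2
  obtain V where "V \<in> N_s" "V \<subseteq> V1 \<inter> V2" using gB_int[OF good_Ns V(1) V(3)] by blast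
  then have "convex hull V \<in> CN" "convex hull V \<subseteq> W1 \<inter> W2" unfolding V(2,4)
    using CN_I hull_mono[of V V1 convex] hull_mono[of V V2 convex] by auto
  then show "\<exists>V\<in>CN. V \<subseteq> W1 \<inter> W2" by blast
qed

lemma CN_convex: "\<forall>V\<in>CN. convex V" using CN_E by (metis convex_convex_hull)



theorem proposition2p1:
  fixes \<mu> \<nu> :: "(nat \<Rightarrow> real) topology"
  assumes mu: "finest (\<lambda>T. vector_topology T \<and> e_null T) \<mu>"
      and nu: "finest (\<lambda>T. locally_convex_vector_topology T \<and> e_null T) \<nu>"
  shows "nbhd_base \<mu> 0 N_s \<and>
         nbhd_base \<nu> 0 {convex hull V | V. V \<in> N_s} \<and>
         (\<forall>U t a. nbhd \<nu> 0 U \<and> t \<ge> 1 \<and> a > 0 \<longrightarrow>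
           (\<exists>q\<ge>1. \<forall>(m :: nat \<Rightarrow> nat) (lam :: nat \<Rightarrow> real).
              (q < m 1 \<and> (\<forall>i j. 1 \<le> i \<and> i < j \<and> j \<le> t \<longrightarrow> m i < m j) \<and>
               (\<forall>i\<in>{1..t}. \<bar>lam i\<bar> \<le> 1))
              \<longrightarrow> (\<Sum>i=1..t. (lam i * a) *\<^sub>R e (m i)) \<in> U))"
proof -
  have vmu: "vector_topology \<mu>" "e_null \<mu>"
    and fmu: "\<And>T' U. vector_topology T' \<Longrightarrow> e_null T' \<Longrightarrow> openin T' U \<Longrightarrow> openin \<mu> U"
    using mu unfolding finest_def by blast+
  have lnu: "locally_convex_vector_topology \<nu>" "e_null \<nu>"
    and fnu: "\<And>T' U. locally_convex_vector_topology T' \<Longrightarrow> e_null T' \<Longrightarrow> openin T' U \<Longrightarrow> openin \<nu> U"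
    using nu unfolding finest_def by blast+
  have vnu: "vector_topology \<nu>" using lnu(1) unfolding locally_convex_vector_topology_def by blast
  have CNeq: "{convex hull V | V. V \<in> N_s} = CN" unfolding CN_def by (rule refl)
  have P1: "nbhd_base \<mu> 0 N_s"
    unfolding nbhd_base_def
  proof (intro conjI ballI allI impI)
    fix V assume V: "V \<in> N_s"
    obtain W where W: "openin (topB N_s) W" "0 \<in> W" "W \<subseteq> V"
      using nbhd_topB[OF good_Ns V] unfolding nbhd_def by blast
    have "openin \<mu> W" using fmu[OF vt_topB[OF good_Ns] enull_topB[OF good_Ns] W(1)] .
    then show "nbhd \<mu> 0 V" unfolding nbhd_def using W(2,3) by blast
  next
    fix U assume "nbhd \<mu> 0 U"
    then obtain W where W: "openin \<mu> W" "0 \<in> W" "W \<subseteq> U" unfolding nbhd_def by blast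
    obtain V where "V \<in> N_s" "V \<subseteq> W" using VT_Ns[OF vmu W(1,2)] by blast
    then show "\<exists>V\<in>N_s. V \<subseteq> U" using W(3) by blast
  qed
  have P2b: "\<exists>V\<in>N_s. convex hull V \<subseteq> U" if "nbhd \<nu> 0 U" for U
  proof -
    from that obtain W where W: "openin \<nu> W" "0 \<in> W" "W \<subseteq> U" unfolding nbhd_def by (elim exE conjE)
    have lc: "\<forall>U. openin \<nu> U \<and> 0 \<in> U \<longrightarrow> (\<exists>V. openin \<nu> V \<and> convex V \<and> 0 \<in> V \<and> V \<subseteq> U)"
      using lnu(1) unfolding locally_convex_vector_topology_def by (elim conjE)
    from lc[rule_format, OF conjI[OF W(1,2)]]
    obtain W' where W': "openin \<nu> W'" "convex W'" "0 \<in> W'" "W' \<subseteq> W" by (elim exE conjE)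
    from VT_Ns[OF vnu lnu(2) W'(1,3)] obtain V where V: "V \<in> N_s" "V \<subseteq> W'" by (elim bexE)
    have "convex hull V \<subseteq> W'" using V(2) W'(2) by (rule hull_minimal)
    then have "convex hull V \<subseteq> U" using W'(4) W(3) by (meson order_trans)
    then show ?thesis using V(1) by (rule bexI)
  qed
  have P2: "nbhd_base \<nu> 0 {convex hull V | V. V \<in> N_s}"
    unfolding CNeq nbhd_base_def
  proof (intro conjI ballI allI impI)
    fix V assume V: "V \<in> CN"
    obtain W where W: "openin (topB CN) W" "0 \<in> W" "W \<subseteq> V"
      using nbhd_topB[OF good_CN V] unfolding nbhd_def by blast
    have "openin \<nu> W" using fnu[OF lcvt_topB[OF good_CN CN_convex] enull_topB[OF good_CN] W(1)] .
    then show "nbhd \<nu> 0 V" unfolding nbhd_def using W(2,3) by blast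
  next
    fix U assume "nbhd \<nu> 0 U"
    then obtain V where V: "V \<in> N_s" "convex hull V \<subseteq> U" using P2b by meson
    show "\<exists>V\<in>CN. V \<subseteq> U" using CN_I[OF V(1)] V(2) by (rule bexI[rotated])
  qed
  have P3: "\<exists>q\<ge>1. \<forall>(m :: nat \<Rightarrow> nat) (lam :: nat \<Rightarrow> real).
              (q < m 1 \<and> (\<forall>i j. 1 \<le> i \<and> i < j \<and> j \<le> t \<longrightarrow> m i < m j) \<and>
               (\<forall>i\<in>{1..t}. \<bar>lam i\<bar> \<le> 1))
              \<longrightarrow> (\<Sum>i=1..t. (lam i * a) *\<^sub>R e (m i)) \<in> U"
    if U: "nbhd \<nu> 0 U" and t: "t \<ge> 1" and a: "a > 0" for U t a
  proof -
    obtain V where V: "V \<in> N_s" "convex hull V \<subseteq> U" using P2b[OF U] by blast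
    obtain as where as: "\<forall>k. as k \<in> seqA" "V = Useq as" using V(1) by (rule N_sE)
    have "eventually (\<lambda>n. real t * a + 1 \<le> as 0 n) sequentially"
      using as(1) unfolding seqA_def filterlim_at_top by blast
    then obtain N where N: "\<And>n. n \<ge> N \<Longrightarrow> real t * a + 1 \<le> as 0 n" unfolding eventually_sequentially by blast
    define q where "q = max N 1"
    have "\<forall>(m :: nat \<Rightarrow> nat) (lam :: nat \<Rightarrow> real).
              (q < m 1 \<and> (\<forall>i j. 1 \<le> i \<and> i < j \<and> j \<le> t \<longrightarrow> m i < m j) \<and>
               (\<forall>i\<in>{1..t}. \<bar>lam i\<bar> \<le> 1))
              \<longrightarrow> (\<Sum>i=1..t. (lam i * a) *\<^sub>R e (m i)) \<in> U"
    proof (intro allI impI)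
      fix m :: "nat \<Rightarrow> nat" and lam :: "nat \<Rightarrow> real"
      assume h: "q < m 1 \<and> (\<forall>i j. 1 \<le> i \<and> i < j \<and> j \<le> t \<longrightarrow> m i < m j) \<and> (\<forall>i\<in>{1..t}. \<bar>lam i\<bar> \<le> 1)"
      have mi: "q < m i" if i: "i \<in> {1..t}" for i
      proof (cases "i = 1")
        case True then show ?thesis using h by simp
      next
        case False
        then have "m 1 < m i" using h i by auto
        then show ?thesis using h by simp
      qed
      define y where "y i = (real t * lam i * a) *\<^sub>R e (m i)" for i
      have yV: "y i \<in> convex hull V" if i: "i \<in> {1..t}" for i
      proof -
        have m1: "m i \<ge> 1" "m i \<ge> N" using mi[OF i] unfolding q_def by auto
        have "\<bar>real t * lam i * a\<bar> = real t * \<bar>lam i\<bar> * a" using a by (simp add: abs_mult)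
        also have "\<dots> \<le> real t * 1 * a" using h i a by (intro mult_right_mono mult_left_mono) auto
        also have "\<dots> < as 0 (m i)" using N[OF m1(2)] by simp
        finally have "y i \<in> S (as 0)" unfolding S_def y_def using m1(1) by blast
        then have "y i \<in> V" using S_sub_Useq as(2) by blast
        then show ?thesis using hull_subset[of V convex] by (rule subsetD[rotated])
      qed
      have tpos: "real t > 0" using t by simp
      have "(\<Sum>i\<in>{1..t}. (1 / real t) *\<^sub>R y i) \<in> convex hull V"
      proof (rule convex_sum)
        show "finite {1..t}" by simp
        show "convex (convex hull V)" by simp
        show "(\<Sum>i\<in>{1..t}. 1 / real t) = 1" using tpos by simp
        show "\<And>i. i \<in> {1..t} \<Longrightarrow> 0 \<le> 1 / real t" by simp
        show "\<And>i. i \<in> {1..t} \<Longrightarrow> y i \<in> convex hull V" by (rule yV)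
      qed
      moreover have "(\<Sum>i\<in>{1..t}. (1 / real t) *\<^sub>R y i) = (\<Sum>i=1..t. (lam i * a) *\<^sub>R e (m i))"
        by (rule sum.cong) (use tpos in \<open>simp_all add: y_def\<close>)
      ultimately show "(\<Sum>i=1..t. (lam i * a) *\<^sub>R e (m i)) \<in> U" using V(2) by auto
    qed
    moreover have "q \<ge> 1" unfolding q_def by simp
    ultimately show ?thesis by blast
  qed
  show ?thesis using P1 P2 P3 by blast
qed


end
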